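(* Let $b>1$ and $\mu\ge0$. Suppose: (i) $P$ satisfies $(1/2,b)$-multiplicative-expansion on $\mathcal{X}$; (ii) $P$ is $\mathcal{A}$-separated by the ground-truth classifier, i.e. $\mathcal{R}_{\mathcal{A}}(G^* )\le\mu$; (iii) for classifiers $G$, whenever $P$ satisfies $(c,\rho)$-constant-expansion for some $c$, $\mathcal{R}_{\mathcal{A}}(G)<\rho$, and $\min_i P(\{x:G(x)=i\})>2\max\{c,\mathcal{R}_{\mathcal{A}}(G)\}$, there exists a permutation $\pi$ of $[K]$ with $P(\{x:\pi(G(x))\neq G^*(x)\})\le\max\{c,\mathcal{R}_{\mathcal{A}}(G)\}+\mathcal{R}_{\mathcal{A}}(G)$. Assume further $\min_{y\in[K]}P(\{x:G^*(x)=y\})>\max\{\frac{2}{b-1},2\}\mu$. Then any minimizer $\widehat G$ of $$\min_G \mathcal{R}_{\mathcal{A}}(G)\quad\text{subject to}\quad \min_{y\in[K]}\mathbb{E}_P[\mathbf{1}(G(x)=y)]>\max\left\{\tfrac{2}{b-1},2\right\}\mathcal{R}_{\mathcal{A}}(G)$$ (over classifiers $G:\mathcal{X}\to[K]$) satisfies $\mathrm{Err}_{\mathrm{unsup}}(\widehat G)\le\max\left\{\tfrac{2}{b-1},2\right\}\mu$.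
   Context: $P$ is a distribution on $\mathcal{X}$ with ground-truth labelling $G^*:\mathcal{X}\to[K]$, $\mathcal{Q}_i:=\{x:G^*(x)=i\}$, $P_i(S)=P(S\cap\mathcal{Q}_i)/P(\mathcal{Q}_i)$. With augmentation maps $\mathcal{T}_{wa}$ and radius $r$: $\mathcal{A}(x):=\{x':\exists T\in\mathcal{T}_{wa},\ \|x'-T(x)\|\le r\}$, $\mathcal{N}(x):=\{x':\mathcal{A}(x)\cap\mathcal{A}(x')\neq\emptyset\}$, $\mathcal{N}(S):=\bigcup_{x\in S}\mathcal{N}(x)$, $\mathcal{N}^*(S):=\bigcup_{i}(\mathcal{N}(S\cap\mathcal{Q}_i)\cap\mathcal{Q}_i)$. $(a,b)$-multiplicative-expansion: for every $i$ and $S\subseteq\mathcal{Q}_i$ with $P_i(S)\le a$, $P_i(\mathcal{N}(S))\ge\min\{bP_i(S),1\}$. $(c,\rho)$-constant-expansion: for every $S$ with $P(S)\ge c$ and $P(S\cap\mathcal{Q}_i)\le P(\mathcal{Q}_i)/2$ for all $i$, $P(\mathcal{N}^*(S)\setminus S)\ge\min\{\rho,P(S)\}$. $\mathcal{R}_{\mathcal{A}}(G):=\mathbb{E}_{x\sim P}[\mathbf{1}(\exists x'\in\mathcal{A}(x)\text{ with }G(x')\neq G(x))]$. $\mathrm{Err}_{\mathrm{unsup}}(G):=\min_{\pi}P(\{x:\pi(G(x))\neq G^*(x)\})$ over permutations $\pi$ of $[K]$. *)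

theory Defs
  imports "HOL-Probability.Probability" "HOL-Combinatorics.Permutations"
begin

text \<open>Outer probability of an arbitrary set (coincides with measure M S for
  measurable S); used for every occurrence of P(S) in the paper.\<close>
definition oprob :: "'a measure \<Rightarrow> 'a set \<Rightarrow> real" where
  "oprob M S = (INF T \<in> {T \<in> sets M. S \<inter> space M \<subseteq> T}. measure M T)"

definition cls :: "'a measure \<Rightarrow> ('a \<Rightarrow> nat) \<Rightarrow> nat \<Rightarrow> 'a set" where
  "cls M Gs i = {x \<in> space M. Gs x = i}"

definition pcond :: "'a measure \<Rightarrow> ('a \<Rightarrow> nat) \<Rightarrow> nat \<Rightarrow> 'a set \<Rightarrow> real" where
  "pcond M Gs i S = oprob M (S \<inter> cls M Gs i) / measure M (cls M Gs i)"

definition Aug :: "('a::real_normed_vector \<Rightarrow> 'a) set \<Rightarrow> real \<Rightarrow> 'a \<Rightarrow> 'a set" where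
  "Aug Tw r x = {x'. \<exists>T \<in> Tw. norm (x' - T x) \<le> r}"

definition Nb :: "('a::real_normed_vector \<Rightarrow> 'a) set \<Rightarrow> real \<Rightarrow> 'a \<Rightarrow> 'a set" where
  "Nb Tw r x = {x'. Aug Tw r x \<inter> Aug Tw r x' \<noteq> {}}"

definition NbS :: "('a::real_normed_vector \<Rightarrow> 'a) set \<Rightarrow> real \<Rightarrow> 'a set \<Rightarrow> 'a set" where
  "NbS Tw r S = (\<Union>x\<in>S. Nb Tw r x)"

definition NbStar :: "'a measure \<Rightarrow> ('a \<Rightarrow> nat) \<Rightarrow> nat \<Rightarrow>
    ('a::real_normed_vector \<Rightarrow> 'a) set \<Rightarrow> real \<Rightarrow> 'a set \<Rightarrow> 'a set" where
  "NbStar M Gs K Tw r S = (\<Union>i<K. NbS Tw r (S \<inter> cls M Gs i) \<inter> cls M Gs i)"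

definition mult_expansion :: "'a measure \<Rightarrow> ('a \<Rightarrow> nat) \<Rightarrow> nat \<Rightarrow>
    ('a::real_normed_vector \<Rightarrow> 'a) set \<Rightarrow> real \<Rightarrow> real \<Rightarrow> real \<Rightarrow> bool" where
  "mult_expansion M Gs K Tw r a b \<longleftrightarrow>
     (\<forall>i<K. \<forall>S. S \<subseteq> cls M Gs i \<longrightarrow> pcond M Gs i S \<le> a \<longrightarrow>
        pcond M Gs i (NbS Tw r S) \<ge> min (b * pcond M Gs i S) 1)"

definition const_expansion :: "'a measure \<Rightarrow> ('a \<Rightarrow> nat) \<Rightarrow> nat \<Rightarrow>
    ('a::real_normed_vector \<Rightarrow> 'a) set \<Rightarrow> real \<Rightarrow> real \<Rightarrow> real \<Rightarrow> bool" where
  "const_expansion M Gs K Tw r c \<rho> \<longleftrightarrow>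
     (\<forall>S. S \<subseteq> space M \<longrightarrow> oprob M S \<ge> c \<longrightarrow>
        (\<forall>i<K. oprob M (S \<inter> cls M Gs i) \<le> measure M (cls M Gs i) / 2) \<longrightarrow>
        oprob M (NbStar M Gs K Tw r S - S) \<ge> min \<rho> (oprob M S))"

definition RA :: "'a measure \<Rightarrow> ('a::real_normed_vector \<Rightarrow> 'a) set \<Rightarrow> real \<Rightarrow> ('a \<Rightarrow> nat) \<Rightarrow> real" where
  "RA M Tw r G = oprob M {x \<in> space M. \<exists>x' \<in> Aug Tw r x. G x' \<noteq> G x}"

definition err_unsup :: "'a measure \<Rightarrow> ('a \<Rightarrow> nat) \<Rightarrow> nat \<Rightarrow> ('a \<Rightarrow> nat) \<Rightarrow> real" where
  "err_unsup M Gs K G =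
     Min {oprob M {x \<in> space M. \<pi> (G x) \<noteq> Gs x} | \<pi>. \<pi> permutes {..<K}}"

end

theory Submission
  imports Defs
begin



lemma oprob_env:
  assumes "prob_space M"
  shows "\<exists>T\<in>sets M. A \<inter> space M \<subseteq> T \<and> measure M T = oprob M A"
proof -
  interpret prob_space M by fact
  define C where "C = {T \<in> sets M. A \<inter> space M \<subseteq> T}"
  have ne: "C \<noteq> {}" unfolding C_def by auto
  have bdd: "bdd_below (measure M ` C)" by (rule bdd_belowI[of _ 0]) auto
  have o: "oprob M A = (INF T\<in>C. measure M T)" unfolding oprob_def C_def by simp
  have "\<forall>n::nat. \<exists>T\<in>C. measure M T < oprob M A + inverse (of_nat (Suc n))"
  proof
    fix n :: nat
    have "(INF T\<in>C. measure M T) < oprob M A + inverse (of_nat (Suc n))"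
      using o by simp
    then show "\<exists>T\<in>C. measure M T < oprob M A + inverse (of_nat (Suc n))"
      using cINF_less_iff[OF ne bdd] by blast
  qed
  then obtain T where T: "\<And>n. T n \<in> C" "\<And>n. measure M (T n) < oprob M A + inverse (of_nat (Suc n))"
    by metis
  define U where "U = (\<Inter>n. T n)"
  have Us: "U \<in> sets M" unfolding U_def using T(1) C_def by auto
  have UA: "A \<inter> space M \<subseteq> U" unfolding U_def using T(1) C_def by auto
  have "U \<in> C" using Us UA C_def by auto
  then have ge: "oprob M A \<le> measure M U" using o cINF_lower[OF bdd] by simp
  have le: "measure M U \<le> oprob M A"
  proof (rule ccontr)
    assume "\<not> ?thesis"
    then have "0 < measure M U - oprob M A" by simp
    then obtain n where n: "inverse (of_nat (Suc n)) < measure M U - oprob M A"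
      using reals_Archimedean by blast
    have "measure M U \<le> measure M (T n)"
      using T(1)[of n] C_def by (intro finite_measure_mono) (auto simp: U_def)
    with T(2)[of n] n show False by simp
  qed
  show ?thesis using Us UA ge le by auto
qed

lemma oprob_lower:
  assumes "prob_space M" "T \<in> sets M" "A \<inter> space M \<subseteq> T"
  shows "oprob M A \<le> measure M T"
proof -
  interpret prob_space M by fact
  have bdd: "bdd_below (measure M ` {T \<in> sets M. A \<inter> space M \<subseteq> T})"
    by (rule bdd_belowI[of _ 0]) auto
  show ?thesis unfolding oprob_def using assms by (intro cINF_lower[OF bdd]) auto
qed

lemma oprob_nonneg:
  assumes "prob_space M" shows "0 \<le> oprob M A"
  using oprob_env[OF assms, of A] by (metis measure_nonneg)

lemma oprob_meas:
  assumes "prob_space M" "A \<in> sets M"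
  shows "oprob M A = measure M A"
proof -
  interpret prob_space M by fact
  obtain T where T: "T \<in> sets M" "A \<inter> space M \<subseteq> T" "measure M T = oprob M A"
    using oprob_env[OF assms(1)] by blast
  have "A \<subseteq> space M" using assms(2) sets.sets_into_space by auto
  then have "measure M A \<le> measure M T" using T by (intro finite_measure_mono) auto
  moreover have "oprob M A \<le> measure M A" using oprob_lower[OF assms(1) assms(2)] by auto
  ultimately show ?thesis using T by simp
qed

lemma oprob_mono:
  assumes "prob_space M" "A \<subseteq> B"
  shows "oprob M A \<le> oprob M B"
proof -
  obtain T where T: "T \<in> sets M" "B \<inter> space M \<subseteq> T" "measure M T = oprob M B"
    using oprob_env[OF assms(1)] by blast
  have "oprob M A \<le> measure M T" using T assms by (intro oprob_lower) auto
  then show ?thesis using T by simp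
qed

lemma oprob_union:
  assumes "prob_space M"
  shows "oprob M (A \<union> B) \<le> oprob M A + oprob M B"
proof -
  interpret prob_space M by fact
  obtain T where T: "T \<in> sets M" "A \<inter> space M \<subseteq> T" "measure M T = oprob M A"
    using oprob_env[OF assms(1)] by blast
  obtain U where U: "U \<in> sets M" "B \<inter> space M \<subseteq> U" "measure M U = oprob M B"
    using oprob_env[OF assms(1)] by blast
  have "oprob M (A \<union> B) \<le> measure M (T \<union> U)" using T U by (intro oprob_lower[OF assms]) auto
  also have "\<dots> \<le> measure M T + measure M U" using T U by (intro measure_Un_le) auto
  finally show ?thesis using T U by simp
qed

lemma oprob_sep:
  assumes "prob_space M" "Q \<in> sets M" "A \<subseteq> Q" "B \<inter> Q = {}"
  shows "oprob M A + oprob M B \<le> oprob M (A \<union> B)"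
proof -
  interpret prob_space M by fact
  obtain T where T: "T \<in> sets M" "(A \<union> B) \<inter> space M \<subseteq> T" "measure M T = oprob M (A \<union> B)"
    using oprob_env[OF assms(1)] by blast
  have "oprob M A \<le> measure M (T \<inter> Q)" using T assms by (intro oprob_lower[OF assms(1)]) auto
  moreover have "oprob M B \<le> measure M (T - Q)" using T assms by (intro oprob_lower[OF assms(1)]) auto
  moreover have "measure M T = measure M (T \<inter> Q) + measure M (T - Q)"
  proof -
    have "T = (T \<inter> Q) \<union> (T - Q)" by auto
    then have "measure M T = measure M ((T \<inter> Q) \<union> (T - Q))" by simp
    also have "\<dots> = measure M (T \<inter> Q) + measure M (T - Q)"
      using T assms by (intro finite_measure_Union) auto
    finally show ?thesis .
  qed
  ultimately show ?thesis using T by simp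
qed

lemma oprob_sum_le:
  assumes "prob_space M" "finite I"
  shows "oprob M (\<Union>i\<in>I. A i) \<le> (\<Sum>i\<in>I. oprob M (A i))"
  using assms(2)
proof (induction I rule: finite_induct)
  case empty then show ?case using oprob_meas[OF assms(1), of "{}"] by simp
next
  case (insert j I)
  have "oprob M (\<Union>i\<in>insert j I. A i) = oprob M (A j \<union> (\<Union>i\<in>I. A i))" by simp
  also have "\<dots> \<le> oprob M (A j) + oprob M (\<Union>i\<in>I. A i)" by (rule oprob_union[OF assms(1)])
  finally show ?case using insert by simp
qed

lemma oprob_sum_ge:
  assumes "prob_space M" "finite I" "\<And>i. i \<in> I \<Longrightarrow> Q i \<in> sets M"
    "\<And>i. i \<in> I \<Longrightarrow> A i \<subseteq> Q i" "\<And>i j. i \<in> I \<Longrightarrow> j \<in> I \<Longrightarrow> i \<noteq> j \<Longrightarrow> Q i \<inter> Q j = {}"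
  shows "(\<Sum>i\<in>I. oprob M (A i)) \<le> oprob M (\<Union>i\<in>I. A i)"
  using assms(2-5)
proof (induction I rule: finite_induct)
  case empty then show ?case using oprob_nonneg[OF assms(1)] by simp
next
  case (insert j I)
  have "(\<Sum>i\<in>insert j I. oprob M (A i)) = oprob M (A j) + (\<Sum>i\<in>I. oprob M (A i))"
    using insert by simp
  also have "\<dots> \<le> oprob M (A j) + oprob M (\<Union>i\<in>I. A i)" using insert by auto
  also have "\<dots> \<le> oprob M (A j \<union> (\<Union>i\<in>I. A i))"
  proof (rule oprob_sep[OF assms(1), of "Q j"])
    show "Q j \<in> sets M" "A j \<subseteq> Q j" using insert by auto
    show "(\<Union>i\<in>I. A i) \<inter> Q j = {}"
    proof -
      have "\<And>i. i \<in> I \<Longrightarrow> A i \<inter> Q j = {}"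
        using insert.prems(2,3)[of _] insert.hyps(2) by (metis disjoint_iff insertCI subsetD)
      then show ?thesis by blast
    qed
  qed
  finally show ?case by simp
qed

lemma cls_sets:
  assumes "Gs \<in> measurable M (count_space UNIV)"
  shows "cls M Gs i \<in> sets M"
proof -
  have "Gs -` {i} \<inter> space M \<in> sets M" using measurable_sets[OF assms] by auto
  moreover have "cls M Gs i = Gs -` {i} \<inter> space M" unfolding cls_def by auto
  ultimately show ?thesis by simp
qed

lemma const_exp:
  assumes P: "prob_space M"
    and Gs_range: "\<forall>x. Gs x < K"
    and Gs_meas: "Gs \<in> measurable M (count_space UNIV)"
    and b: "b > 1"
    and mult: "mult_expansion M Gs K Tw r (1/2) b"
    and pos: "\<forall>i<K. measure M (cls M Gs i) > 0"
  shows "const_expansion M Gs K Tw r (\<rho> / (b - 1)) \<rho>"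
  unfolding const_expansion_def
proof (intro allI impI)
  fix S assume Ssp: "S \<subseteq> space M" and Sc: "\<rho> / (b - 1) \<le> oprob M S"
    and half: "\<forall>i<K. oprob M (S \<inter> cls M Gs i) \<le> measure M (cls M Gs i) / 2"
  define a where "a i = oprob M (S \<inter> cls M Gs i)" for i
  define q where "q i = measure M (cls M Gs i)" for i
  define T where "T i = NbS Tw r (S \<inter> cls M Gs i) \<inter> cls M Gs i - (S \<inter> cls M Gs i)" for i
  define m where "m = min (b - 1) 1"
  have mpos: "m > 0" using b m_def by simp
  have step1: "oprob M (T i) \<ge> m * a i" if i: "i < K" for i
  proof -
    have qp: "q i > 0" using pos i q_def by simp
    have a0: "a i \<ge> 0" using oprob_nonneg[OF P] a_def by simp
    have ah: "a i \<le> q i / 2" using half i a_def q_def by simp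
    have pc: "pcond M Gs i (S \<inter> cls M Gs i) = a i / q i"
      unfolding pcond_def a_def q_def by (simp add: Int_assoc)
    have "a i / q i \<le> 1/2" using ah qp by (simp add: divide_simps)
    then have "pcond M Gs i (S \<inter> cls M Gs i) \<le> 1/2" using pc by simp
    then have "pcond M Gs i (NbS Tw r (S \<inter> cls M Gs i)) \<ge> min (b * pcond M Gs i (S \<inter> cls M Gs i)) 1"
      using mult i unfolding mult_expansion_def by blast
    then have nq: "oprob M (NbS Tw r (S \<inter> cls M Gs i) \<inter> cls M Gs i) / q i \<ge> min (b * (a i / q i)) 1"
      using pc unfolding pcond_def[of M Gs i "NbS Tw r (S \<inter> cls M Gs i)"] q_def by simp
    define n where "n = oprob M (NbS Tw r (S \<inter> cls M Gs i) \<inter> cls M Gs i)"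
    have nge: "n \<ge> min (b * a i) (q i)"
    proof (cases "b * (a i / q i) \<le> 1")
      case True
      then have "n / q i \<ge> b * (a i / q i)" using nq n_def by simp
      then have "n \<ge> b * a i" using qp by (simp add: divide_simps)
      then show ?thesis by simp
    next
      case False
      then have "n / q i \<ge> 1" using nq n_def by simp
      then have "n \<ge> q i" using qp by (simp add: divide_simps)
      then show ?thesis by simp
    qed
    have "n \<le> oprob M (T i \<union> (S \<inter> cls M Gs i))"
      unfolding n_def T_def by (intro oprob_mono[OF P]) auto
    also have "\<dots> \<le> oprob M (T i) + a i" unfolding a_def by (rule oprob_union[OF P])
    finally have "oprob M (T i) \<ge> min (b * a i) (q i) - a i" using nge by simp
    moreover have "min (b * a i) (q i) - a i \<ge> m * a i"
    proof (cases "b \<le> 2")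
      case True
      then have "m = b - 1" using m_def by simp
      moreover have "(b - 1) * a i \<le> 1 * a i" using True a0 by (intro mult_right_mono) auto
      ultimately show ?thesis using ah a0 True by (auto simp: algebra_simps min_def)
    next
      case False
      then have "m = 1" using m_def by simp
      moreover have "b * a i \<ge> 2 * a i" using False a0 by (intro mult_right_mono) auto
      ultimately show ?thesis using ah a0 by (auto simp: algebra_simps min_def)
    qed
    ultimately show ?thesis by simp
  qed
  have eq: "NbStar M Gs K Tw r S - S = (\<Union>i\<in>{..<K}. T i)"
    unfolding NbStar_def T_def by auto
  have "(\<Sum>i\<in>{..<K}. oprob M (T i)) \<le> oprob M (\<Union>i\<in>{..<K}. T i)"
    by (rule oprob_sum_ge[OF P, where Q="cls M Gs"])
       (auto simp: cls_sets[OF Gs_meas] T_def, auto simp: cls_def)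
  moreover have "(\<Sum>i\<in>{..<K}. m * a i) \<le> (\<Sum>i\<in>{..<K}. oprob M (T i))"
    using step1 by (intro sum_mono) auto
  moreover have "oprob M S \<le> (\<Sum>i\<in>{..<K}. a i)"
  proof -
    have "S = (\<Union>i\<in>{..<K}. S \<inter> cls M Gs i)"
      using Ssp Gs_range unfolding cls_def by auto
    then have "oprob M S = oprob M (\<Union>i\<in>{..<K}. S \<inter> cls M Gs i)" by simp
    also have "\<dots> \<le> (\<Sum>i\<in>{..<K}. a i)" unfolding a_def by (rule oprob_sum_le[OF P]) simp
    finally show ?thesis .
  qed
  ultimately have main: "oprob M (NbStar M Gs K Tw r S - S) \<ge> m * oprob M S"
    using eq mpos by (simp add: sum_distrib_left[symmetric])
       (smt (verit) mult_left_mono)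
  show "min \<rho> (oprob M S) \<le> oprob M (NbStar M Gs K Tw r S - S)"
  proof (cases "b \<le> 2")
    case True
    then have "m = b - 1" using m_def by simp
    moreover have "(b - 1) * (\<rho> / (b - 1)) \<le> (b - 1) * oprob M S"
      using Sc b by (intro mult_left_mono) auto
    ultimately show ?thesis using main b by simp
  next
    case False
    then show ?thesis using main m_def by simp
  qed
qed

theorem theorem1:
  fixes M :: "'a::real_normed_vector measure"
    and Gs :: "'a \<Rightarrow> nat" and K :: nat
    and Tw :: "('a \<Rightarrow> 'a) set" and r b \<mu> :: real
    and Ghat :: "'a \<Rightarrow> nat"
  assumes P: "prob_space M"
    and Gs_range: "\<forall>x. Gs x < K"
    and Gs_meas: "Gs \<in> measurable M (count_space UNIV)"
    and b: "b > 1" and mu: "\<mu> \<ge> 0"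
    and mult: "mult_expansion M Gs K Tw r (1/2) b"
    and sep: "RA M Tw r Gs \<le> \<mu>"
    and cluster: "\<forall>G c \<rho>. (\<forall>x. G x < K) \<longrightarrow> const_expansion M Gs K Tw r c \<rho> \<longrightarrow>
        RA M Tw r G < \<rho> \<longrightarrow>
        (\<forall>i<K. oprob M {x \<in> space M. G x = i} > 2 * max c (RA M Tw r G)) \<longrightarrow>
        (\<exists>\<pi>. \<pi> permutes {..<K} \<and>
           oprob M {x \<in> space M. \<pi> (G x) \<noteq> Gs x} \<le> max c (RA M Tw r G) + RA M Tw r G)"
    and classes: "\<forall>y<K. measure M (cls M Gs y) > max (2 / (b - 1)) 2 * \<mu>"
    and Ghat_range: "\<forall>x. Ghat x < K"
    and Ghat_feas: "\<forall>y<K. oprob M {x \<in> space M. Ghat x = y} > max (2 / (b - 1)) 2 * RA M Tw r Ghat"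
    and Ghat_min: "\<forall>G. (\<forall>x. G x < K) \<longrightarrow>
        (\<forall>y<K. oprob M {x \<in> space M. G x = y} > max (2 / (b - 1)) 2 * RA M Tw r G) \<longrightarrow>
        RA M Tw r Ghat \<le> RA M Tw r G"
  shows "err_unsup M Gs K Ghat \<le> max (2 / (b - 1)) 2 * \<mu>"
proof -
  interpret prob_space M by (rule P)
  define k where "k = 1 / (b - 1)"
  have kpos: "k > 0" using b k_def by simp
  have kb: "k * (b - 1) = 1" using b k_def by simp
  define m where "m = max (2 / (b - 1)) 2"
  have m2: "m \<ge> 2" "m \<ge> 2 * k" using m_def k_def by auto
  have Kpos: "K > 0" using Gs_range by (metis gr_zeroI not_less_zero)
  have clsm: "oprob M {x \<in> space M. Gs x = y} = measure M (cls M Gs y)" for y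
    using oprob_meas[OF P cls_sets[OF Gs_meas, of y]] by (simp add: cls_def)
  have RGs0: "0 \<le> RA M Tw r Gs" unfolding RA_def by (rule oprob_nonneg[OF P])
  define R where "R = RA M Tw r Ghat"
  have R0: "0 \<le> R" unfolding R_def RA_def by (rule oprob_nonneg[OF P])
  have mmu: "m * RA M Tw r Gs \<le> m * \<mu>" using sep m2 by (intro mult_left_mono) auto
  have "\<forall>y<K. oprob M {x \<in> space M. Gs x = y} > max (2 / (b - 1)) 2 * RA M Tw r Gs"
    using classes mmu clsm m_def by force
  then have RleGs: "R \<le> RA M Tw r Gs" using Ghat_min Gs_range R_def by blast
  have Rmu: "R \<le> \<mu>" using RleGs sep by simp
  have m0: "m * \<mu> \<ge> 0" using m2 mu by simp
  have pos: "\<forall>i<K. measure M (cls M Gs i) > 0" using classes m0 m_def by force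
  define D where "D = Min ((\<lambda>i. oprob M {x \<in> space M. Ghat x = i}) ` {..<K})"
  have Dle: "D \<le> oprob M {x \<in> space M. Ghat x = i}" if "i < K" for i
    unfolding D_def using that by (intro Min_le) auto
  have DmR: "D > m * R" unfolding D_def using Kpos Ghat_feas m_def R_def
    by (subst Min_gr_iff) auto
  have mR: "m * R \<ge> 2 * R" "m * R \<ge> 2 * k * R" using m2 R0 by (auto intro: mult_right_mono)
  have fin: "finite ((\<lambda>\<pi>. oprob M {x \<in> space M. \<pi> (Ghat x) \<noteq> Gs x}) ` {\<pi>. \<pi> permutes {..<K}})"
    by (intro finite_imageI finite_permutations) simp
  have eset: "{oprob M {x \<in> space M. \<pi> (Ghat x) \<noteq> Gs x} | \<pi>. \<pi> permutes {..<K}}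
      = (\<lambda>\<pi>. oprob M {x \<in> space M. \<pi> (Ghat x) \<noteq> Gs x}) ` {\<pi>. \<pi> permutes {..<K}}" by auto
  define e where "e = err_unsup M Gs K Ghat"
  show ?thesis
  proof (rule ccontr)
    assume "\<not> ?thesis"
    then have em: "e > m * \<mu>" using e_def m_def by simp
    have D2R: "D * (b - 1) > 2 * R"
    proof -
      have "D > 2 * k * R" using DmR mR by simp
      then have "D * (b - 1) > 2 * k * R * (b - 1)" using b by (intro mult_strict_right_mono) auto
      also have "2 * k * R * (b - 1) = 2 * R * (k * (b - 1))" by (simp only: mult_ac)
      also have "\<dots> = 2 * R" using kb by simp
      finally show ?thesis .
    qed
    define \<delta> where "\<delta> = min ((e - m * \<mu>) * (b - 1) / 2) ((D * (b - 1) - 2 * R) / 4)"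
    have dpos: "\<delta> > 0" using em D2R \<delta>_def b by simp
    define \<rho> where "\<rho> = R + \<delta>"
    define c where "c = \<rho> / (b - 1)"
    have ck: "c = k * \<rho>" using c_def k_def by simp
    have ce: "const_expansion M Gs K Tw r c \<rho>"
      unfolding c_def by (rule const_exp[OF P Gs_range Gs_meas b mult pos])
    have Rr: "RA M Tw r Ghat < \<rho>" using dpos R_def \<rho>_def by simp
    have c2: "2 * c < D"
    proof -
      have "\<delta> \<le> (D * (b - 1) - 2 * R) / 4" unfolding \<delta>_def by (rule min.cobounded2)
      moreover have "\<And>X d. d \<le> (X - 2 * R) / 4 \<Longrightarrow> 2 * R < X \<Longrightarrow> 2 * R + 2 * d < X"
        by (simp add: field_simps)
      ultimately have "2 * R + 2 * \<delta> < D * (b - 1)" using D2R by blast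
      then have "k * (2 * R + 2 * \<delta>) < k * (D * (b - 1))" using kpos by simp
      also have "k * (D * (b - 1)) = D" using kb by (simp add: algebra_simps)
      finally show ?thesis using ck \<rho>_def by (simp add: algebra_simps)
    qed
    have feas: "\<forall>i<K. oprob M {x \<in> space M. Ghat x = i} > 2 * max c (RA M Tw r Ghat)"
      using Dle c2 DmR mR R_def by (smt (verit))
    obtain \<pi> where pi: "\<pi> permutes {..<K}"
      "oprob M {x \<in> space M. \<pi> (Ghat x) \<noteq> Gs x} \<le> max c R + R"
      using cluster Ghat_range ce Rr feas R_def by blast
    have "e \<le> oprob M {x \<in> space M. \<pi> (Ghat x) \<noteq> Gs x}"
      unfolding e_def err_unsup_def eset using fin pi(1) by (intro Min_le) auto
    also have "\<dots> \<le> max c R + R" by (rule pi(2))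
    also have "\<dots> \<le> m * R + k * \<delta>"
    proof (cases "b \<le> 2")
      case True
      have "k * (b - 1) \<le> k * 1" using True kpos by (intro mult_left_mono) auto
      then have k1: "k \<ge> 1" using kb by simp
      then have "k * R \<ge> 1 * R" using R0 by (intro mult_right_mono) auto
      moreover have "k * \<delta> > 0" using kpos dpos by simp
      ultimately show ?thesis using ck \<rho>_def mR by (simp add: algebra_simps max_def)
    next
      case False
      have "k * (b - 1) \<ge> k * 1" using False kpos by (intro mult_left_mono) auto
      then have k1: "k \<le> 1" using kb by simp
      then have "k * R \<le> 1 * R" using R0 by (intro mult_right_mono) auto
      moreover have "k * \<delta> > 0" using kpos dpos by simp
      ultimately show ?thesis using ck \<rho>_def mR by (simp add: algebra_simps max_def)
    qed
    also have "\<dots> < e"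
    proof -
      have "k * \<delta> \<le> k * ((e - m * \<mu>) * (b - 1) / 2)" using kpos \<delta>_def by (intro mult_left_mono) auto
      also have "\<dots> = (e - m * \<mu>) / 2" unfolding k_def using b by (simp add: field_simps)
      finally have "k * \<delta> \<le> (e - m * \<mu>) / 2" .
      moreover have "m * R \<le> m * \<mu>" using Rmu m2 by (intro mult_left_mono) auto
      ultimately show ?thesis using em by simp
    qed
    finally show False by simp
  qed
qed

end
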